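(* Let $G:\mathbb{R}^2\to\mathbb{C}$ be quasi-periodic, and let $K,N\geq 8$ be integers and $(x,y)\in[0,1/K)\times[0,1/N)$. Assume $G(x+i/K,\,y+j/N)\neq 0$ for all $(i,j)\in\mathbb{Z}^2$, and let $H:\mathbb{R}^2\to\mathbb{R}$ be any function with $G=|G|e^{2\pi i H}$ at these points. Set $h_{i,j}=H(x+i/K,\,y+j/N)$ for $(i,j)\in\mathbb{Z}^2$. Then there exist integers $0\le i<K$ and $0\le j<N$ such that either $$\operatorname{dist}(h_{i+1,j}-h_{i,j},\mathbb{Z})>\tfrac18\quad\text{or}\quad \operatorname{dist}(h_{i,j+1}-h_{i,j},\mathbb{Z})>\tfrac18.$$
   Context: A function $G$ on $\mathbb{R}^2$ is quasi-periodic if $G(x,y+1)=G(x,y)$ and $G(x+1,y)=e^{2\pi i y}G(x,y)$ for all $(x,y)\in\mathbb{R}^2$. *)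

theory Defs
  imports "HOL-Analysis.Analysis"
begin

definition quasi_periodic :: "(real \<Rightarrow> real \<Rightarrow> complex) \<Rightarrow> bool" where
  "quasi_periodic G \<longleftrightarrow>
     (\<forall>x y. G x (y + 1) = G x y \<and> G (x + 1) y = exp (2 * pi * \<i> * complex_of_real y) * G x y)"

definition dist_Z :: "real \<Rightarrow> real" where
  "dist_Z t = infdist t \<int>"

end

theory Submission imports Defs begin

definition rr :: "real \<Rightarrow> real" where "rr t = t - of_int (round t)"

lemma rr_le_distZ: "\<bar>rr t\<bar> \<le> dist_Z t"
proof -
  have "\<bar>rr t\<bar> \<le> (INF a\<in>\<int>. dist t a)"
  proof (rule cINF_greatest)
    show "(\<int>::real set) \<noteq> {}" by auto
    fix a :: real assume "a \<in> \<int>"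
    then obtain m where "a = of_int m" by (auto elim: Ints_cases)
    then show "\<bar>rr t\<bar> \<le> dist t a" using round_diff_minimal[of t m]
      by (simp add: rr_def dist_real_def)
  qed
  moreover have "(\<int>::real set) \<noteq> {}" by auto
  ultimately show ?thesis by (simp add: dist_Z_def infdist_notempty)
qed

lemma rr_Ints: "t - rr t \<in> \<int>" by (simp add: rr_def)

lemma rr_half: "\<bar>rr t\<bar> \<le> 1/2"
  using of_int_round_abs_le[of t] by (simp add: rr_def abs_minus_commute)

lemma rr_unique: assumes "t - s \<in> \<int>" "\<bar>s\<bar> < 1/2" shows "rr t = s"
proof -
  obtain m where m: "t - s = of_int m" using assms(1) by (auto elim: Ints_cases)
  have "round t = m" by (rule round_unique') (use m assms(2) in \<open>simp add: algebra_simps\<close>)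
  then show ?thesis using m by (simp add: rr_def)
qed

lemma small_int_zero: assumes "(u::real) \<in> \<int>" "\<bar>u\<bar> < 1" shows "u = 0"
  using assms by (auto elim!: Ints_cases)

lemma exp_eq_Ints: assumes "exp (2 * pi * \<i> * complex_of_real a) = exp (2 * pi * \<i> * complex_of_real b)"
  shows "a - b \<in> \<int>"
proof -
  obtain n :: int where "2 * pi * \<i> * complex_of_real a = 2 * pi * \<i> * complex_of_real b + (of_int (2 * n) * pi) * \<i>"
    using assms exp_eq by blast
  then have "2 * pi * \<i> * (complex_of_real a - complex_of_real b - of_int n) = 0"
    by (simp add: algebra_simps)
  then have "complex_of_real a - complex_of_real b - of_int n = 0" by simp
  then have "a = b + of_int n"
    by (metis add_diff_cancel_left' diff_add_cancel eq_iff_diff_eq_0 of_real_add of_real_eq_iff of_real_of_int_eq)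
  then show ?thesis by simp
qed
theorem lemma2:
  fixes G :: "real \<Rightarrow> real \<Rightarrow> complex"
    and H :: "real \<Rightarrow> real \<Rightarrow> real"
    and K N :: nat and x y :: real
  assumes "quasi_periodic G"
    and "K \<ge> 8" and "N \<ge> 8"
    and "0 \<le> x" and "x < 1 / real K" and "0 \<le> y" and "y < 1 / real N"
    and "\<forall>i j :: int. G (x + of_int i / real K) (y + of_int j / real N) \<noteq> 0"
    and "\<forall>i j :: int. G (x + of_int i / real K) (y + of_int j / real N) =
           complex_of_real (cmod (G (x + of_int i / real K) (y + of_int j / real N)))
           * exp (2 * pi * \<i> * complex_of_real (H (x + of_int i / real K) (y + of_int j / real N)))"
  shows "\<exists>i j :: int. 0 \<le> i \<and> i < int K \<and> 0 \<le> j \<and> j < int N \<and>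
     (let h = (\<lambda>a b :: int. H (x + of_int a / real K) (y + of_int b / real N)) in
        dist_Z (h (i + 1) j - h i j) > 1 / 8 \<or> dist_Z (h i (j + 1) - h i j) > 1 / 8)"
proof (rule ccontr)
  assume neg: "\<not> ?thesis"
  have Kp: "real K > 0" and Np: "real N > 0" using assms(2,3) by auto
  have N8: "1 / real N \<le> 1/8" using assms(3) by (simp add: field_simps)
  define h where "h = (\<lambda>a b :: int. H (x + of_int a / real K) (y + of_int b / real N))"
  define g where "g = (\<lambda>a b :: int. G (x + of_int a / real K) (y + of_int b / real N))"
  have gnz: "\<And>a b. g a b \<noteq> 0" using assms(8) by (simp add: g_def)
  have gpol: "\<And>a b. g a b = complex_of_real (cmod (g a b)) * exp (2 * pi * \<i> * complex_of_real (h a b))"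
    using assms(9) by (simp add: g_def h_def)
  have qp1: "\<And>u v. G (u + 1) v = exp (2 * pi * \<i> * complex_of_real v) * G u v"
   and qp2: "\<And>u v. G u (v + 1) = G u v"
    using assms(1) by (auto simp: quasi_periodic_def)
  have polar_eq: "h a' b' - h a b - s \<in> \<int>"
    if "g a' b' = exp (2 * pi * \<i> * complex_of_real s) * g a b" for a b a' b' s
  proof -
    have cm: "cmod (g a' b') = cmod (g a b)" using that by (simp add: norm_mult)
    have c0: "complex_of_real (cmod (g a b)) \<noteq> 0" using gnz by simp
    have "complex_of_real (cmod (g a b)) * exp (2 * pi * \<i> * complex_of_real (h a' b')) =
          complex_of_real (cmod (g a b)) * (exp (2 * pi * \<i> * complex_of_real s) * exp (2 * pi * \<i> * complex_of_real (h a b)))"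
      using that gpol[of a' b'] gpol[of a b] cm by (metis mult.left_commute)
    then have "exp (2 * pi * \<i> * complex_of_real (h a' b')) = exp (2 * pi * \<i> * complex_of_real (h a b + s))"
      using c0 by (simp add: exp_add[symmetric] algebra_simps)
    from exp_eq_Ints[OF this] show ?thesis by (simp add: algebra_simps)
  qed
  have P1: "h (i + int K) j - h i j - (y + of_int j / real N) \<in> \<int>" for i j
  proof -
    have "x + of_int (i + int K) / real K = (x + of_int i / real K) + 1"
      using Kp by (simp add: field_simps)
    then have "g (i + int K) j = exp (2 * pi * \<i> * complex_of_real (y + of_int j / real N)) * g i j"
      unfolding g_def by (simp only: qp1)
    from polar_eq[OF this] show ?thesis .
  qed
  have P2: "h i (j + int N) - h i j \<in> \<int>" for i j
  proof -
    have "y + of_int (j + int N) / real N = (y + of_int j / real N) + 1"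
      using Np by (simp add: field_simps)
    then have "g i (j + int N) = exp (2 * pi * \<i> * complex_of_real 0) * g i j"
      unfolding g_def by (simp only: qp2) simp
    from polar_eq[OF this] show ?thesis by simp
  qed
  have small: "dist_Z (h (i + 1) j - h i j) \<le> 1/8 \<and> dist_Z (h i (j + 1) - h i j) \<le> 1/8"
    if "0 \<le> i" "i < int K" "0 \<le> j" "j < int N" for i j
    using neg that unfolding h_def Let_def by force
  define \<rho> where "\<rho> i j = rr (h (i + 1) j - h i j)" for i j
  define \<sigma> where "\<sigma> i j = rr (h i (j + 1) - h i j)" for i j
  have \<rho>b: "\<bar>\<rho> i j\<bar> \<le> 1/8" and \<sigma>b: "\<bar>\<sigma> i j\<bar> \<le> 1/8"
    if "0 \<le> i" "i < int K" "0 \<le> j" "j < int N" for i j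
    using small[OF that] rr_le_distZ unfolding \<rho>_def \<sigma>_def by (meson order_trans)+
  have \<sigma>K: "\<sigma> (int K) j = \<sigma> 0 j + 1 / real N" if "0 \<le> j" "j < int N" for j
    unfolding \<sigma>_def
  proof (rule rr_unique)
    have "(h (int K) (j + 1) - h (int K) j) - (rr (h 0 (j + 1) - h 0 j) + 1 / real N) =
      (h (0 + int K) (j + 1) - h 0 (j + 1) - (y + of_int (j + 1) / real N))
      - (h (0 + int K) j - h 0 j - (y + of_int j / real N))
      + ((h 0 (j + 1) - h 0 j) - rr (h 0 (j + 1) - h 0 j))"
      using Np by (simp add: field_simps)
    then show "(h (int K) (j + 1) - h (int K) j) - (rr (h 0 (j + 1) - h 0 j) + 1 / real N) \<in> \<int>"
      using P1 rr_Ints by (metis Ints_add Ints_diff)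
    show "\<bar>rr (h 0 (j + 1) - h 0 j) + 1 / real N\<bar> < 1/2"
    proof -
      have "\<bar>rr (h 0 (j + 1) - h 0 j)\<bar> \<le> 1/8" using \<sigma>b[of 0 j] that assms(2) unfolding \<sigma>_def by simp
      moreover have "0 < 1 / real N" using Np by simp
      ultimately show ?thesis using N8 by linarith
    qed
  qed
  have \<rho>N: "\<rho> i (int N) = \<rho> i 0" if "0 \<le> i" "i < int K" for i
    unfolding \<rho>_def
  proof (rule rr_unique)
    have "(h (i + 1) (int N) - h i (int N)) - rr (h (i + 1) 0 - h i 0) =
      (h (i + 1) (0 + int N) - h (i + 1) 0) - (h i (0 + int N) - h i 0)
      + ((h (i + 1) 0 - h i 0) - rr (h (i + 1) 0 - h i 0))"
      by simp
    then show "(h (i + 1) (int N) - h i (int N)) - rr (h (i + 1) 0 - h i 0) \<in> \<int>"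
      using P2 rr_Ints by (metis Ints_add Ints_diff)
    show "\<bar>rr (h (i + 1) 0 - h i 0)\<bar> < 1/2"
      using \<rho>b[of i 0] that assms(3) unfolding \<rho>_def by simp
  qed
  have sq: "\<rho> i j + \<sigma> (i + 1) j - \<rho> i (j + 1) - \<sigma> i j = 0"
    if "0 \<le> i" "i < int K" "0 \<le> j" "j < int N" for i j
  proof (rule small_int_zero)
    have "\<rho> i j + \<sigma> (i + 1) j - \<rho> i (j + 1) - \<sigma> i j =
      - (((h (i + 1) j - h i j) - \<rho> i j) + ((h (i + 1) (j + 1) - h (i + 1) j) - \<sigma> (i + 1) j)
         - ((h (i + 1) (j + 1) - h i (j + 1)) - \<rho> i (j + 1)) - ((h i (j + 1) - h i j) - \<sigma> i j))"
      by simp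
    then show "\<rho> i j + \<sigma> (i + 1) j - \<rho> i (j + 1) - \<sigma> i j \<in> \<int>"
      unfolding \<rho>_def \<sigma>_def using rr_Ints by (metis Ints_add Ints_diff Ints_minus)
    have b1: "\<bar>\<sigma> (i + 1) j\<bar> \<le> 1/4"
    proof (cases "i + 1 < int K")
      case True then show ?thesis using \<sigma>b[of "i+1" j] that by simp
    next
      case False then have "i + 1 = int K" using that by simp
      moreover have "\<bar>\<sigma> 0 j\<bar> \<le> 1/8" using \<sigma>b[of 0 j] that assms(2) by simp
      moreover have "0 < 1 / real N" using Np by simp
      moreover have eq: "\<sigma> (i + 1) j = \<sigma> 0 j + 1 / real N" using \<sigma>K[of j] that \<open>i + 1 = int K\<close> by simp
      ultimately show ?thesis using N8 unfolding abs_le_iff eq by linarith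
    qed
    have b2: "\<bar>\<rho> i (j + 1)\<bar> \<le> 1/8"
    proof (cases "j + 1 < int N")
      case True then show ?thesis using \<rho>b[of i "j+1"] that by simp
    next
      case False then have "j + 1 = int N" using that by simp
      then show ?thesis using \<rho>N[of i] \<rho>b[of i 0] that assms(3) by simp
    qed
    show "\<bar>\<rho> i j + \<sigma> (i + 1) j - \<rho> i (j + 1) - \<sigma> i j\<bar> < 1"
      using b1 b2 \<rho>b[OF that] \<sigma>b[OF that] unfolding abs_le_iff abs_less_iff by linarith
  qed
  define S where "S j = (\<Sum>i<K. \<rho> (int i) j)" for j
  have step: "S (j + 1) = S j + 1 / real N" if "0 \<le> j" "j < int N" for j
  proof -
    have "(\<Sum>i<K. \<rho> (int i) j + \<sigma> (int (Suc i)) j - \<rho> (int i) (j + 1) - \<sigma> (int i) j) = 0"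
    proof (intro sum.neutral ballI)
      fix i assume "i \<in> {..<K}"
      then show "\<rho> (int i) j + \<sigma> (int (Suc i)) j - \<rho> (int i) (j + 1) - \<sigma> (int i) j = 0"
        using sq[of "int i" j] that by (simp add: add.commute)
    qed
    moreover have "(\<Sum>i<K. \<rho> (int i) j + \<sigma> (int (Suc i)) j - \<rho> (int i) (j + 1) - \<sigma> (int i) j)
       = S j - S (j + 1) + (\<Sum>i<K. \<sigma> (int (Suc i)) j - \<sigma> (int i) j)"
      unfolding S_def by (simp add: sum.distrib sum_subtractf algebra_simps)
    moreover have "(\<Sum>i<K. \<sigma> (int (Suc i)) j - \<sigma> (int i) j) = \<sigma> (int K) j - \<sigma> 0 j"
      using sum_lessThan_telescope[of "\<lambda>n. \<sigma> (int n) j" K] by simp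
    ultimately show ?thesis using \<sigma>K[OF that] by simp
  qed
  have ind: "n \<le> N \<Longrightarrow> S (int n) = S 0 + real n / real N" for n
  proof (induction n)
    case 0 then show ?case by simp
  next
    case (Suc n)
    then have "S (int n + 1) = S (int n) + 1 / real N" by (intro step) auto
    then show ?case using Suc by (simp add: add_divide_distrib add.commute add.left_commute)
  qed
  have "S (int N) = S 0" unfolding S_def using \<rho>N by (intro sum.cong) auto
  then show False using ind[of N] Np by simp
qed

end
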